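(* If an nfc-transducer $\mathcal{T}=(Q,V,\Delta,q_0)$ is consistent with a BPA system $\mathcal{G}=(V,\mathit{Act},\mathcal{R})$, then $\alpha\approx_{q_0}\mathcal{T}_{q_0}(\alpha)$ for every $\alpha\in V^*$.
   Context: A BPA system $\mathcal{G}=(V,\mathit{Act},\mathcal{R})$: finite variables $V$, finite actions $\mathit{Act}$ (possibly containing silent $\tau$), rules $A\xrightarrow{a}\alpha$; LTS $\mathcal{L}_\mathcal{G}$ on $V^*$ with $A\beta\xrightarrow{a}\alpha\beta$ for rules $A\xrightarrow{a}\alpha$. Transducer $\mathcal{T}=(Q,V,\Delta,q_0)$ reading right to left, $q'\xleftarrow{A/\gamma}q$ meaning $\Delta(q,A)=(q',\gamma)$, extended to strings by $q\xleftarrow{\varepsilon/\varepsilon}q$ and composition; $\mathcal{T}_q(\alpha)$ is the output from $q$ on $\alpha$. $q$-normal form: $\varepsilon$ or $A_k\cdots A_1$ with $q_k\xleftarrow{A_k/A_k}\cdots q_1\xleftarrow{A_1/A_1}q$. nfc-transducer: each $\mathcal{T}_q(A)$ is a $q$-normal form and $q'\xleftarrow{A/\gamma}q$ implies $q'\xleftarrow{\gamma/\gamma}q$. Long moves $\alpha\overset{a}{\Rightarrow}_q\beta$: either $a=\tau$ and $\beta=\mathcal{T}_q(\alpha)$, or $\alpha=\alpha_0\xrightarrow{\tau}\cdots\xrightarrow{\tau}\alpha_k\xrightarrow{a}\beta'$ in $\mathcal{L}_\mathcal{G}$ with $\mathcal{T}_q(\alpha_0)=\cdots=\mathcal{T}_q(\alpha_k)$,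 $\mathcal{T}_q(\beta')=\beta$. $\alpha_1\approx_q\alpha_2$ iff they have the same sets of long-move results for each action. Consistency: (1) $A\approx_{q_0}\varepsilon$ if $\mathcal{T}_{q_0}(A)=\varepsilon$; (2) $A\approx_q\mathcal{T}_q(A)$ if $\mathcal{T}_q(A)\ne\varepsilon$; (3) $AC\approx_qC$ if $\mathcal{T}_q(AC)=\mathcal{T}_q(C)=C$. *)

theory Defs
  imports Main
begin

text \<open>Variables are the elements of a finite type 'v; actions live in
  a type 'a, the action set Act is an explicit finite set, and tau is the silent action
  (which may or may not belong to Act). A rule (A, a, alpha) stands for A -a-> alpha.
  Words in V* are lists, leftmost symbol first.\<close>

type_synonym ('v, 'a) rule = "'v \<times> 'a \<times> 'v list"

definition bpa :: "'a set \<Rightarrow> ('v::finite, 'a) rule set \<Rightarrow> bool" where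
  "bpa Act R \<longleftrightarrow> finite Act \<and> finite R \<and> (\<forall>(A, a, \<alpha>) \<in> R. a \<in> Act)"

definition lts_step :: "('v, 'a) rule set \<Rightarrow> 'v list \<Rightarrow> 'a \<Rightarrow> 'v list \<Rightarrow> bool" where
  "lts_step R \<alpha> a \<beta> \<longleftrightarrow> (\<exists>A \<gamma> \<delta>. \<alpha> = A # \<delta> \<and> (A, a, \<gamma>) \<in> R \<and> \<beta> = \<gamma> @ \<delta>)"

text \<open>Transducers (Q, V, Delta, q0) with Q the finite type 'q; Delta q A = (q', gamma)
  means q' <-A/gamma- q. Words are read right to left. trun Delta q alpha = (q', gamma)
  means q' <-alpha/gamma- q.\<close>
type_synonym ('q, 'v) trans = "'q \<Rightarrow> 'v \<Rightarrow> 'q \<times> 'v list"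

fun trun :: "('q, 'v) trans \<Rightarrow> 'q \<Rightarrow> 'v list \<Rightarrow> 'q \<times> 'v list" where
  "trun \<Delta> q [] = (q, [])"
| "trun \<Delta> q (A # \<alpha>) =
     (let (q1, \<gamma>1) = trun \<Delta> q \<alpha>; (q2, \<gamma>2) = \<Delta> q1 A in (q2, \<gamma>2 @ \<gamma>1))"

definition tout :: "('q, 'v) trans \<Rightarrow> 'q \<Rightarrow> 'v list \<Rightarrow> 'v list" where
  "tout \<Delta> q \<alpha> = snd (trun \<Delta> q \<alpha>)"

text \<open>q-normal form: epsilon or A_k ... A_1 with q_k <-A_k/A_k- ... q_1 <-A_1/A_1- q.
  nf_rev checks this on the reversed word A_1 ... A_k.\<close>
fun nf_rev :: "('q, 'v) trans \<Rightarrow> 'q \<Rightarrow> 'v list \<Rightarrow> bool" where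
  "nf_rev \<Delta> q [] = True"
| "nf_rev \<Delta> q (A # rs) = (snd (\<Delta> q A) = [A] \<and> nf_rev \<Delta> (fst (\<Delta> q A)) rs)"

definition q_normal :: "('q, 'v) trans \<Rightarrow> 'q \<Rightarrow> 'v list \<Rightarrow> bool" where
  "q_normal \<Delta> q \<beta> \<longleftrightarrow> nf_rev \<Delta> q (rev \<beta>)"

definition nfc :: "('q::finite, 'v::finite) trans \<Rightarrow> bool" where
  "nfc \<Delta> \<longleftrightarrow>
     (\<forall>q A. q_normal \<Delta> q (tout \<Delta> q [A])) \<and>
     (\<forall>q A q' \<gamma>. \<Delta> q A = (q', \<gamma>) \<longrightarrow> trun \<Delta> q \<gamma> = (q', \<gamma>))"

definition long_move ::
  "('v, 'a) rule set \<Rightarrow> 'a \<Rightarrow> ('q, 'v) trans \<Rightarrow> 'q \<Rightarrow> 'v list \<Rightarrow> 'a \<Rightarrow> 'v list \<Rightarrow> bool" where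
  "long_move R tau \<Delta> q \<alpha> a \<beta> \<longleftrightarrow>
     (a = tau \<and> \<beta> = tout \<Delta> q \<alpha>) \<or>
     (\<exists>xs \<beta>'. xs \<noteq> [] \<and> hd xs = \<alpha> \<and>
        (\<forall>i < length xs - 1. lts_step R (xs ! i) tau (xs ! Suc i)) \<and>
        (\<forall>i < length xs. tout \<Delta> q (xs ! i) = tout \<Delta> q \<alpha>) \<and>
        lts_step R (last xs) a \<beta>' \<and> tout \<Delta> q \<beta>' = \<beta>)"

definition lequiv ::
  "'a set \<Rightarrow> ('v, 'a) rule set \<Rightarrow> 'a \<Rightarrow> ('q, 'v) trans \<Rightarrow> 'q \<Rightarrow> 'v list \<Rightarrow> 'v list \<Rightarrow> bool" where
  "lequiv Act R tau \<Delta> q \<alpha>1 \<alpha>2 \<longleftrightarrow>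
     (\<forall>a \<in> Act. {\<beta>. long_move R tau \<Delta> q \<alpha>1 a \<beta>} = {\<beta>. long_move R tau \<Delta> q \<alpha>2 a \<beta>})"

definition consistent ::
  "'a set \<Rightarrow> ('v, 'a) rule set \<Rightarrow> 'a \<Rightarrow> ('q, 'v) trans \<Rightarrow> 'q \<Rightarrow> bool" where
  "consistent Act R tau \<Delta> q0 \<longleftrightarrow>
     (\<forall>A. tout \<Delta> q0 [A] = [] \<longrightarrow> lequiv Act R tau \<Delta> q0 [A] []) \<and>
     (\<forall>q A. tout \<Delta> q [A] \<noteq> [] \<longrightarrow> lequiv Act R tau \<Delta> q [A] (tout \<Delta> q [A])) \<and>
     (\<forall>q A C. tout \<Delta> q [A, C] = [C] \<and> tout \<Delta> q [C] = [C]
        \<longrightarrow> lequiv Act R tau \<Delta> q [A, C] [C])"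

end

theory Submission
  imports Defs
begin

lemma trun_Cons': "trun \<Delta> q (A#\<alpha>) = (fst (\<Delta> (fst (trun \<Delta> q \<alpha>)) A), snd (\<Delta> (fst (trun \<Delta> q \<alpha>)) A) @ snd (trun \<Delta> q \<alpha>))"
  by (simp add: split_def Let_def)

declare trun.simps(2)[simp del]
declare trun_Cons'[simp]

lemma trun_app_fst: "fst (trun \<Delta> q (xs@ys)) = fst (trun \<Delta> (fst (trun \<Delta> q ys)) xs)"
  by (induction xs) auto

lemma trun_app_snd: "snd (trun \<Delta> q (xs@ys)) = snd (trun \<Delta> (fst (trun \<Delta> q ys)) xs) @ snd (trun \<Delta> q ys)"
  by (induction xs) (auto simp: trun_app_fst)

lemma tout_app: "tout \<Delta> q (xs@ys) = tout \<Delta> (fst (trun \<Delta> q ys)) xs @ tout \<Delta> q ys"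
  by (simp add: tout_def trun_app_snd)

lemma tout_Nil[simp]: "tout \<Delta> q [] = []" by (simp add: tout_def)

lemma nfc2: "nfc \<Delta> \<Longrightarrow> trun \<Delta> q (snd (\<Delta> q A)) = \<Delta> q A"
  unfolding nfc_def by (metis prod.collapse)

lemma idem: "nfc \<Delta> \<Longrightarrow> trun \<Delta> q (snd (trun \<Delta> q \<alpha>)) = trun \<Delta> q \<alpha>"
proof (induction \<alpha>)
  case Nil then show ?case by simp
next
  case (Cons A \<alpha>)
  show ?case
    using Cons nfc2[OF Cons.prems, of "fst (trun \<Delta> q \<alpha>)" A]
    by (simp add: prod_eq_iff trun_app_fst trun_app_snd)
qed

lemma erase_state: "nfc \<Delta> \<Longrightarrow> snd (\<Delta> q A) = [] \<Longrightarrow> fst (\<Delta> q A) = q"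
  using nfc2[of \<Delta> q A] by (metis fst_conv trun.simps(1))

lemma tout_nil_state: "nfc \<Delta> \<Longrightarrow> tout \<Delta> q \<alpha> = [] \<Longrightarrow> fst (trun \<Delta> q \<alpha>) = q"
proof (induction \<alpha>)
  case Nil then show ?case by simp
next
  case (Cons A \<alpha>)
  then show ?case using erase_state[OF Cons.prems(1)] by (simp add: tout_def)
qed

fun nfend :: "('q, 'v) trans \<Rightarrow> 'q \<Rightarrow> 'v list \<Rightarrow> 'q" where
  "nfend \<Delta> q [] = q"
| "nfend \<Delta> q (A#rs) = nfend \<Delta> (fst (\<Delta> q A)) rs"

lemma nf_app: "nf_rev \<Delta> q (xs@ys) \<longleftrightarrow> nf_rev \<Delta> q xs \<and> nf_rev \<Delta> (nfend \<Delta> q xs) ys"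
  by (induction xs arbitrary: q) auto

lemma nfend_app: "nfend \<Delta> q (xs@ys) = nfend \<Delta> (nfend \<Delta> q xs) ys"
  by (induction xs arbitrary: q) auto

lemma nfend_trun: "nf_rev \<Delta> q (rev w) \<Longrightarrow> nfend \<Delta> q (rev w) = fst (trun \<Delta> q w)"
  by (induction w) (auto simp: nf_app nfend_app)

lemma normal_out: "nfc \<Delta> \<Longrightarrow> nf_rev \<Delta> q (rev (tout \<Delta> q \<alpha>))"
proof (induction \<alpha>)
  case Nil then show ?case by simp
next
  case (Cons A \<alpha>)
  have n1: "q_normal \<Delta> (fst (trun \<Delta> q \<alpha>)) (tout \<Delta> (fst (trun \<Delta> q \<alpha>)) [A])"
    using Cons.prems unfolding nfc_def by blast
  have e: "nfend \<Delta> q (rev (tout \<Delta> q \<alpha>)) = fst (trun \<Delta> q \<alpha>)"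
    using nfend_trun[OF Cons.IH[OF Cons.prems]] idem[OF Cons.prems, of q \<alpha>]
    by (simp add: tout_def)
  show ?case using Cons.IH[OF Cons.prems] n1 e
    by (simp add: tout_def nf_app q_normal_def)
qed

lemma normal_head: "nf_rev \<Delta> q (rev (C#w)) \<Longrightarrow> snd (\<Delta> (fst (trun \<Delta> q w)) C) = [C]"
  using nfend_trun[of \<Delta> q w] by (simp add: nf_app)

inductive tpath :: "('v, 'a) rule set \<Rightarrow> 'a \<Rightarrow> ('q, 'v) trans \<Rightarrow> 'q \<Rightarrow> 'v list \<Rightarrow> 'v list \<Rightarrow> bool"
  for R tau \<Delta> q where
  tp_refl: "tpath R tau \<Delta> q x x"
| tp_step: "lts_step R x tau y \<Longrightarrow> tout \<Delta> q y = tout \<Delta> q x \<Longrightarrow> tpath R tau \<Delta> q y z \<Longrightarrow> tpath R tau \<Delta> q x z"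

lemma tpath_tout: "tpath R tau \<Delta> q x z \<Longrightarrow> tout \<Delta> q z = tout \<Delta> q x"
  by (induction rule: tpath.induct) auto

lemma tpath_trans: "tpath R tau \<Delta> q x y \<Longrightarrow> tpath R tau \<Delta> q y z \<Longrightarrow> tpath R tau \<Delta> q x z"
  by (induction rule: tpath.induct) (auto intro: tpath.intros)

lemma chain_tpath:
  "xs \<noteq> [] \<Longrightarrow> (\<forall>i<length xs - 1. lts_step R (xs!i) tau (xs!Suc i)) \<Longrightarrow> (\<forall>i<length xs. tout \<Delta> q (xs!i) = c) \<Longrightarrow> tpath R tau \<Delta> q (hd xs) (last xs)"
proof (induction xs)
  case Nil then show ?case by simp
next
  case (Cons x xs)
  show ?case
  proof (cases xs)
    case Nil then show ?thesis by (simp add: tp_refl)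
  next
    case (Cons y ys)
    have s: "lts_step R x tau y" using Cons.prems(2) \<open>xs = y#ys\<close> by force
    have t: "tout \<Delta> q y = tout \<Delta> q x"
      using Cons.prems(3)[rule_format, of 0] Cons.prems(3)[rule_format, of 1] \<open>xs = y#ys\<close> by simp
    have p2: "\<forall>i<length xs - 1. lts_step R (xs!i) tau (xs!Suc i)"
    proof (intro allI impI)
      fix i assume "i < length xs - 1"
      then have "Suc i < length (x#xs) - 1" by auto
      from Cons.prems(2)[rule_format, OF this] show "lts_step R (xs!i) tau (xs!Suc i)" by simp
    qed
    have p3: "\<forall>i<length xs. tout \<Delta> q (xs!i) = c"
    proof (intro allI impI)
      fix i assume "i < length xs"
      then have "Suc i < length (x#xs)" by auto
      from Cons.prems(3)[rule_format, OF this] show "tout \<Delta> q (xs!i) = c" by simp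
    qed
    have ih: "tpath R tau \<Delta> q (hd xs) (last xs)"
      using Cons.IH[OF _ p2 p3] \<open>xs = y#ys\<close> by simp
    show ?thesis using tp_step[OF s t] ih \<open>xs = y#ys\<close> by simp
  qed
qed

lemma tpath_chain:
  "tpath R tau \<Delta> q x z \<Longrightarrow> \<exists>xs. xs \<noteq> [] \<and> hd xs = x \<and> last xs = z \<and> (\<forall>i<length xs - 1. lts_step R (xs!i) tau (xs!Suc i)) \<and> (\<forall>i<length xs. tout \<Delta> q (xs!i) = tout \<Delta> q x)"
proof (induction rule: tpath.induct)
  case (tp_refl x) show ?case by (rule exI[of _ "[x]"]) simp
next
  case (tp_step x y z)
  then obtain xs where xs: "xs \<noteq> []" "hd xs = y" "last xs = z"
    "\<forall>i<length xs - 1. lts_step R (xs!i) tau (xs!Suc i)" "\<forall>i<length xs. tout \<Delta> q (xs!i) = tout \<Delta> q y" by blast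
  have x0: "xs!0 = y" using xs by (simp add: hd_conv_nth[symmetric])
  have A: "\<forall>i<length (x#xs) - 1. lts_step R ((x#xs)!i) tau ((x#xs)!Suc i)"
  proof (intro allI impI)
    fix i assume "i < length (x#xs) - 1"
    then show "lts_step R ((x#xs)!i) tau ((x#xs)!Suc i)"
      using xs x0 tp_step.hyps(1) by (cases i) auto
  qed
  have B: "\<forall>i<length (x#xs). tout \<Delta> q ((x#xs)!i) = tout \<Delta> q x"
  proof (intro allI impI)
    fix i assume "i < length (x#xs)"
    then show "tout \<Delta> q ((x#xs)!i) = tout \<Delta> q x" using xs tp_step.hyps(2) by (cases i) auto
  qed
  show ?case using A B xs by (intro exI[of _ "x#xs"]) auto
qed

lemma long_move_alt:
  "long_move R tau \<Delta> q \<alpha> a \<beta> \<longleftrightarrow> (a = tau \<and> \<beta> = tout \<Delta> q \<alpha>) \<or>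
     (\<exists>\<alpha>' \<beta>'. tpath R tau \<Delta> q \<alpha> \<alpha>' \<and> lts_step R \<alpha>' a \<beta>' \<and> tout \<Delta> q \<beta>' = \<beta>)"
proof -
  have "(\<exists>xs \<beta>'. xs \<noteq> [] \<and> hd xs = \<alpha> \<and>
        (\<forall>i < length xs - 1. lts_step R (xs ! i) tau (xs ! Suc i)) \<and>
        (\<forall>i < length xs. tout \<Delta> q (xs ! i) = tout \<Delta> q \<alpha>) \<and>
        lts_step R (last xs) a \<beta>' \<and> tout \<Delta> q \<beta>' = \<beta>) \<longleftrightarrow>
      (\<exists>\<alpha>' \<beta>'. tpath R tau \<Delta> q \<alpha> \<alpha>' \<and> lts_step R \<alpha>' a \<beta>' \<and> tout \<Delta> q \<beta>' = \<beta>)"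
  proof
    assume "\<exists>xs \<beta>'. xs \<noteq> [] \<and> hd xs = \<alpha> \<and>
        (\<forall>i < length xs - 1. lts_step R (xs ! i) tau (xs ! Suc i)) \<and>
        (\<forall>i < length xs. tout \<Delta> q (xs ! i) = tout \<Delta> q \<alpha>) \<and>
        lts_step R (last xs) a \<beta>' \<and> tout \<Delta> q \<beta>' = \<beta>"
    then obtain xs \<beta>' where h: "xs \<noteq> []" "hd xs = \<alpha>"
        "\<forall>i < length xs - 1. lts_step R (xs ! i) tau (xs ! Suc i)"
        "\<forall>i < length xs. tout \<Delta> q (xs ! i) = tout \<Delta> q \<alpha>"
        "lts_step R (last xs) a \<beta>'" "tout \<Delta> q \<beta>' = \<beta>" by blast
    have "tpath R tau \<Delta> q (hd xs) (last xs)" using chain_tpath[OF h(1) h(3) h(4)] .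
    then show "\<exists>\<alpha>' \<beta>'. tpath R tau \<Delta> q \<alpha> \<alpha>' \<and> lts_step R \<alpha>' a \<beta>' \<and> tout \<Delta> q \<beta>' = \<beta>"
      using h by blast
  next
    assume "\<exists>\<alpha>' \<beta>'. tpath R tau \<Delta> q \<alpha> \<alpha>' \<and> lts_step R \<alpha>' a \<beta>' \<and> tout \<Delta> q \<beta>' = \<beta>"
    then obtain \<alpha>' \<beta>' where h: "tpath R tau \<Delta> q \<alpha> \<alpha>'" "lts_step R \<alpha>' a \<beta>'" "tout \<Delta> q \<beta>' = \<beta>" by blast
    from tpath_chain[OF h(1)] obtain xs where xs: "xs \<noteq> []" "hd xs = \<alpha>" "last xs = \<alpha>'"
      "\<forall>i<length xs - 1. lts_step R (xs!i) tau (xs!Suc i)" "\<forall>i<length xs. tout \<Delta> q (xs!i) = tout \<Delta> q \<alpha>" by blast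
    show "\<exists>xs \<beta>'. xs \<noteq> [] \<and> hd xs = \<alpha> \<and>
        (\<forall>i < length xs - 1. lts_step R (xs ! i) tau (xs ! Suc i)) \<and>
        (\<forall>i < length xs. tout \<Delta> q (xs ! i) = tout \<Delta> q \<alpha>) \<and>
        lts_step R (last xs) a \<beta>' \<and> tout \<Delta> q \<beta>' = \<beta>"
      using xs h by blast
  qed
  then show ?thesis unfolding long_move_def by blast
qed

lemma step_Nil[simp]: "\<not> lts_step R [] a \<beta>" by (simp add: lts_step_def)

lemma step_app: "\<alpha> \<noteq> [] \<Longrightarrow> lts_step R (\<alpha> @ \<delta>) a \<beta> \<longleftrightarrow> (\<exists>\<beta>0. lts_step R \<alpha> a \<beta>0 \<and> \<beta> = \<beta>0 @ \<delta>)"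
proof -
  assume "\<alpha> \<noteq> []"
  then obtain A r where a: "\<alpha> = A # r" by (cases \<alpha>) auto
  show ?thesis unfolding lts_step_def a by force
qed

lemma tpath_app: "tpath R tau \<Delta> p \<alpha> \<alpha>' \<Longrightarrow> p = fst (trun \<Delta> q \<delta>) \<Longrightarrow> tpath R tau \<Delta> q (\<alpha>@\<delta>) (\<alpha>'@\<delta>)"
proof (induction rule: tpath.induct)
  case (tp_refl x) show ?case by (rule tpath.tp_refl)
next
  case (tp_step x y z)
  have ne: "x \<noteq> []" using tp_step.hyps(1) step_Nil by metis
  have s: "lts_step R (x@\<delta>) tau (y@\<delta>)" using tp_step.hyps(1) step_app[OF ne, of R \<delta> tau "y@\<delta>"] by blast
  have t: "tout \<Delta> q (y@\<delta>) = tout \<Delta> q (x@\<delta>)" using tp_step.hyps(2) tp_step.prems by (simp add: tout_app)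
  show ?case using tpath.tp_step[OF s t tp_step.IH[OF tp_step.prems]] .
qed

lemma tpath_split: "tpath R tau \<Delta> q w w' \<Longrightarrow> w = \<alpha>@\<delta> \<Longrightarrow> p = fst (trun \<Delta> q \<delta>) \<Longrightarrow>
   (\<exists>\<alpha>'. w' = \<alpha>'@\<delta> \<and> tpath R tau \<Delta> p \<alpha> \<alpha>') \<or> (tpath R tau \<Delta> p \<alpha> [] \<and> tpath R tau \<Delta> q \<delta> w')"
proof (induction arbitrary: \<alpha> rule: tpath.induct)
  case (tp_refl x)
  have "tpath R tau \<Delta> p \<alpha> \<alpha>" by (rule tpath.tp_refl)
  then show ?case using tp_refl.prems(1) by blast
next
  case (tp_step x y z)
  show ?case
  proof (cases "\<alpha> = []")
    case True
    have "tpath R tau \<Delta> q x z" by (rule tpath.tp_step[OF tp_step.hyps(1,2,3)])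
    moreover have "tpath R tau \<Delta> p [] []" by (rule tpath.tp_refl)
    ultimately show ?thesis using True tp_step.prems(1) by simp
  next
    case False
    have "lts_step R (\<alpha>@\<delta>) tau y" using tp_step.hyps(1) tp_step.prems(1) by simp
    then obtain \<alpha>'' where y: "y = \<alpha>''@\<delta>" and s: "lts_step R \<alpha> tau \<alpha>''"
      using step_app[OF False, of R \<delta> tau y] by blast
    have t: "tout \<Delta> p \<alpha>'' = tout \<Delta> p \<alpha>"
      using tp_step.hyps(2) y tp_step.prems by (simp add: tout_app)
    from tp_step.IH[OF y tp_step.prems(2)] show ?thesis
    proof
      assume "\<exists>\<alpha>'. z = \<alpha>'@\<delta> \<and> tpath R tau \<Delta> p \<alpha>'' \<alpha>'"
      then obtain \<alpha>' where "z = \<alpha>'@\<delta>" "tpath R tau \<Delta> p \<alpha>'' \<alpha>'" by blast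
      then show ?thesis using tpath.tp_step[OF s t] by blast
    next
      assume "tpath R tau \<Delta> p \<alpha>'' [] \<and> tpath R tau \<Delta> q \<delta> z"
      then show ?thesis using tpath.tp_step[OF s t] by blast
    qed
  qed
qed

lemma lm_app:
  assumes p: "p = fst (trun \<Delta> q \<delta>)"
  shows "long_move R tau \<Delta> q (\<alpha>@\<delta>) a \<beta> \<longleftrightarrow>
    (\<exists>\<beta>0. long_move R tau \<Delta> p \<alpha> a \<beta>0 \<and> \<beta> = \<beta>0 @ tout \<Delta> q \<delta>) \<or>
    (tpath R tau \<Delta> p \<alpha> [] \<and> long_move R tau \<Delta> q \<delta> a \<beta>)"
proof
  assume "long_move R tau \<Delta> q (\<alpha>@\<delta>) a \<beta>"
  then consider (t) "a = tau" "\<beta> = tout \<Delta> q (\<alpha>@\<delta>)"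
    | (s) w' \<beta>' where "tpath R tau \<Delta> q (\<alpha>@\<delta>) w'" "lts_step R w' a \<beta>'" "tout \<Delta> q \<beta>' = \<beta>"
    unfolding long_move_alt by blast
  then show "(\<exists>\<beta>0. long_move R tau \<Delta> p \<alpha> a \<beta>0 \<and> \<beta> = \<beta>0 @ tout \<Delta> q \<delta>) \<or>
    (tpath R tau \<Delta> p \<alpha> [] \<and> long_move R tau \<Delta> q \<delta> a \<beta>)"
  proof cases
    case t then show ?thesis using p by (auto simp: long_move_alt tout_app)
  next
    case s
    from tpath_split[OF s(1) refl p] show ?thesis
    proof
      assume "\<exists>\<alpha>'. w' = \<alpha>'@\<delta> \<and> tpath R tau \<Delta> p \<alpha> \<alpha>'"
      then obtain \<alpha>' where w: "w' = \<alpha>'@\<delta>" and tp: "tpath R tau \<Delta> p \<alpha> \<alpha>'" by blast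
      show ?thesis
      proof (cases "\<alpha>' = []")
        case True
        then show ?thesis using tp w s by (auto simp: long_move_alt intro: tpath.tp_refl)
      next
        case False
        have "lts_step R (\<alpha>'@\<delta>) a \<beta>'" using s(2) w by simp
        then obtain \<beta>0' where st: "lts_step R \<alpha>' a \<beta>0'" and b: "\<beta>' = \<beta>0'@\<delta>"
          using step_app[OF False, of R \<delta> a \<beta>'] by blast
        have "long_move R tau \<Delta> p \<alpha> a (tout \<Delta> p \<beta>0')"
          using tp st by (auto simp: long_move_alt)
        moreover have "\<beta> = tout \<Delta> p \<beta>0' @ tout \<Delta> q \<delta>" using s(3) b p by (simp add: tout_app)
        ultimately show ?thesis by blast
      qed
    next
      assume "tpath R tau \<Delta> p \<alpha> [] \<and> tpath R tau \<Delta> q \<delta> w'"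
      then show ?thesis using s by (auto simp: long_move_alt)
    qed
  qed
next
  assume "(\<exists>\<beta>0. long_move R tau \<Delta> p \<alpha> a \<beta>0 \<and> \<beta> = \<beta>0 @ tout \<Delta> q \<delta>) \<or>
    (tpath R tau \<Delta> p \<alpha> [] \<and> long_move R tau \<Delta> q \<delta> a \<beta>)"
  then show "long_move R tau \<Delta> q (\<alpha>@\<delta>) a \<beta>"
  proof
    assume "\<exists>\<beta>0. long_move R tau \<Delta> p \<alpha> a \<beta>0 \<and> \<beta> = \<beta>0 @ tout \<Delta> q \<delta>"
    then obtain \<beta>0 where l: "long_move R tau \<Delta> p \<alpha> a \<beta>0" and b: "\<beta> = \<beta>0 @ tout \<Delta> q \<delta>" by blast
    from l consider (t) "a = tau" "\<beta>0 = tout \<Delta> p \<alpha>"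
      | (s) \<alpha>' \<beta>' where "tpath R tau \<Delta> p \<alpha> \<alpha>'" "lts_step R \<alpha>' a \<beta>'" "tout \<Delta> p \<beta>' = \<beta>0"
      unfolding long_move_alt by blast
    then show ?thesis
    proof cases
      case t then show ?thesis using b p by (simp add: long_move_alt tout_app)
    next
      case s
      have ne: "\<alpha>' \<noteq> []" using s(2) by auto
      have "tpath R tau \<Delta> q (\<alpha>@\<delta>) (\<alpha>'@\<delta>)" using tpath_app[OF s(1) p] .
      moreover have "lts_step R (\<alpha>'@\<delta>) a (\<beta>'@\<delta>)" using step_app[OF ne, of R \<delta> a "\<beta>'@\<delta>"] s(2) by blast
      moreover have "tout \<Delta> q (\<beta>'@\<delta>) = \<beta>" using s(3) b p by (simp add: tout_app)
      ultimately show ?thesis by (auto simp: long_move_alt)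
    qed
  next
    assume h: "tpath R tau \<Delta> p \<alpha> [] \<and> long_move R tau \<Delta> q \<delta> a \<beta>"
    have tp: "tpath R tau \<Delta> q (\<alpha>@\<delta>) \<delta>" using tpath_app[OF conjunct1[OF h] p] by simp
    have "tout \<Delta> p \<alpha> = []" using tpath_tout[OF conjunct1[OF h]] by simp
    then have to: "tout \<Delta> q (\<alpha>@\<delta>) = tout \<Delta> q \<delta>" using p by (simp add: tout_app)
    from conjunct2[OF h] consider (t) "a = tau" "\<beta> = tout \<Delta> q \<delta>"
      | (s) w' \<beta>' where "tpath R tau \<Delta> q \<delta> w'" "lts_step R w' a \<beta>'" "tout \<Delta> q \<beta>' = \<beta>"
      unfolding long_move_alt by blast
    then show ?thesis
    proof cases
      case t then show ?thesis using to by (simp add: long_move_alt)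
    next
      case s then show ?thesis using tpath_trans[OF tp s(1)] by (auto simp: long_move_alt)
    qed
  qed
qed

lemma outer:
  assumes "lequiv Act R tau \<Delta> q X Y" "trun \<Delta> q X = trun \<Delta> q Y"
  shows "lequiv Act R tau \<Delta> q (B@X) (B@Y)"
  unfolding lequiv_def set_eq_iff mem_Collect_eq
proof (intro ballI allI)
  fix a \<beta> assume a: "a \<in> Act"
  have eq: "\<And>\<beta>. long_move R tau \<Delta> q X a \<beta> \<longleftrightarrow> long_move R tau \<Delta> q Y a \<beta>"
    using assms(1) a unfolding lequiv_def set_eq_iff by blast
  have t: "tout \<Delta> q X = tout \<Delta> q Y" using assms(2) by (simp add: tout_def)
  show "long_move R tau \<Delta> q (B@X) a \<beta> \<longleftrightarrow> long_move R tau \<Delta> q (B@Y) a \<beta>"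
    using lm_app[where \<Delta>=\<Delta> and q=q and \<delta>=X and \<alpha>=B and a=a and \<beta>=\<beta> and R=R and tau=tau, OF refl]
      lm_app[where \<Delta>=\<Delta> and q=q and \<delta>=Y and \<alpha>=B and a=a and \<beta>=\<beta> and R=R and tau=tau, OF refl]
      eq[of \<beta>] t assms(2) by (simp only:)
qed

lemma inner:
  assumes "lequiv Act R tau \<Delta> p X Y" "tpath R tau \<Delta> p X [] \<longleftrightarrow> tpath R tau \<Delta> p Y []"
    "p = fst (trun \<Delta> q \<delta>)"
  shows "lequiv Act R tau \<Delta> q (X@\<delta>) (Y@\<delta>)"
  unfolding lequiv_def set_eq_iff mem_Collect_eq
proof (intro ballI allI)
  fix a \<beta> assume a: "a \<in> Act"
  have eq: "\<And>\<beta>. long_move R tau \<Delta> p X a \<beta> \<longleftrightarrow> long_move R tau \<Delta> p Y a \<beta>"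
    using assms(1) a unfolding lequiv_def set_eq_iff by blast
  show "long_move R tau \<Delta> q (X@\<delta>) a \<beta> \<longleftrightarrow> long_move R tau \<Delta> q (Y@\<delta>) a \<beta>"
    using lm_app[where \<Delta>=\<Delta> and q=q and \<delta>=\<delta> and \<alpha>=X and a=a and \<beta>=\<beta> and R=R and tau=tau, OF assms(3)]
      lm_app[where \<Delta>=\<Delta> and q=q and \<delta>=\<delta> and \<alpha>=Y and a=a and \<beta>=\<beta> and R=R and tau=tau, OF assms(3)]
      eq assms(2) by (simp only:)
qed

lemma noE: "tout \<Delta> p X \<noteq> [] \<Longrightarrow> \<not> tpath R tau \<Delta> p X []"
  by (metis tpath_tout tout_Nil)

lemma main:
  assumes nfc: "nfc \<Delta>" and cons: "consistent Act R tau \<Delta> q0"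
  shows "lequiv Act R tau \<Delta> q0 (B @ \<alpha>) (B @ tout \<Delta> q0 \<alpha>)"
proof -
  have c1: "\<And>A. tout \<Delta> q0 [A] = [] \<Longrightarrow> lequiv Act R tau \<Delta> q0 [A] []"
    and c2: "\<And>q A. tout \<Delta> q [A] \<noteq> [] \<Longrightarrow> lequiv Act R tau \<Delta> q [A] (tout \<Delta> q [A])"
    and c3: "\<And>q A C. tout \<Delta> q [A, C] = [C] \<Longrightarrow> tout \<Delta> q [C] = [C] \<Longrightarrow> lequiv Act R tau \<Delta> q [A, C] [C]"
    using cons unfolding consistent_def by blast+
  show ?thesis
proof (induction \<alpha> arbitrary: B)
  case Nil show ?case by (simp add: lequiv_def)
next
  case (Cons A \<alpha>)
  define p where "p = fst (trun \<Delta> q0 \<alpha>)"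
  define \<delta> where "\<delta> = tout \<Delta> q0 \<alpha>"
  define \<gamma> where "\<gamma> = snd (\<Delta> p A)"
  have tr: "trun \<Delta> q0 \<delta> = (p, \<delta>)" using idem[OF nfc, of q0 \<alpha>]
    by (simp add: \<delta>_def p_def tout_def)
  have out: "tout \<Delta> q0 (A#\<alpha>) = \<gamma> @ \<delta>" by (simp add: tout_def \<gamma>_def p_def \<delta>_def)
  have 1: "lequiv Act R tau \<Delta> q0 (B@A#\<alpha>) (B@A#\<delta>)" using Cons.IH[of "B@[A]"] by (simp add: \<delta>_def)
  have np: "trun \<Delta> p \<gamma> = \<Delta> p A" using nfc2[OF nfc] by (simp add: \<gamma>_def)
  have trX: "trun \<Delta> q0 (A#\<delta>) = trun \<Delta> q0 (\<gamma>@\<delta>)"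
    using tr np by (simp add: prod_eq_iff trun_app_fst trun_app_snd \<gamma>_def)
  have key: "lequiv Act R tau \<Delta> q0 (A#\<delta>) (\<gamma>@\<delta>)"
  proof (cases "\<gamma> = []")
    case False
    have tA: "tout \<Delta> p [A] = \<gamma>" by (simp add: tout_def \<gamma>_def)
    have l: "lequiv Act R tau \<Delta> p [A] \<gamma>" using c2[of p A] False tA by simp
    have tg: "tout \<Delta> p \<gamma> = \<gamma>" using np by (simp add: tout_def \<gamma>_def)
    have "lequiv Act R tau \<Delta> q0 ([A]@\<delta>) (\<gamma>@\<delta>)"
    proof (rule inner[OF l])
      have e1: "\<not> tpath R tau \<Delta> p [A] []" using noE[of \<Delta> p "[A]" R tau] tA False by simp
      have e2: "\<not> tpath R tau \<Delta> p \<gamma> []" using noE[of \<Delta> p \<gamma> R tau] tg False by simp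
      show "tpath R tau \<Delta> p [A] [] \<longleftrightarrow> tpath R tau \<Delta> p \<gamma> []" using e1 e2 by blast
      show "p = fst (trun \<Delta> q0 \<delta>)" using tr by simp
    qed
    then show ?thesis by simp
  next
    case True
    show ?thesis
    proof (cases \<delta>)
      case Nil
      have "p = q0" using tout_nil_state[OF nfc] Nil by (simp add: p_def \<delta>_def)
      then have "tout \<Delta> q0 [A] = []" using True by (simp add: tout_def \<gamma>_def)
      then have "lequiv Act R tau \<Delta> q0 [A] []" using c1 by blast
      then show ?thesis using Nil True by simp
    next
      case (Cons C w)
      define q' where "q' = fst (trun \<Delta> q0 w)"
      have nn: "nf_rev \<Delta> q0 (rev (C#w))" using normal_out[OF nfc, of q0 \<alpha>] Cons by (simp add: \<delta>_def)
      have hs: "snd (\<Delta> q' C) = [C]" using normal_head[OF nn] by (simp add: q'_def)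
      have hf: "fst (\<Delta> q' C) = p" using tr Cons by (simp add: q'_def)
      have hD: "\<Delta> q' C = (p, [C])" using hs hf by (simp add: prod_eq_iff)
      have pA: "snd (\<Delta> p A) = []" using True by (simp add: \<gamma>_def)
      have t1: "tout \<Delta> q' [A, C] = [C]" using hD pA by (simp add: tout_def)
      have t2: "tout \<Delta> q' [C] = [C]" using hD by (simp add: tout_def)
      have l: "lequiv Act R tau \<Delta> q' [A, C] [C]" using c3 t1 t2 by blast
      have "lequiv Act R tau \<Delta> q0 ([A, C]@w) ([C]@w)"
      proof (rule inner[OF l])
        have e1: "\<not> tpath R tau \<Delta> q' [A,C] []" using noE[of \<Delta> q' "[A,C]" R tau] t1 by simp
        have e2: "\<not> tpath R tau \<Delta> q' [C] []" using noE[of \<Delta> q' "[C]" R tau] t2 by simp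
        show "tpath R tau \<Delta> q' [A,C] [] \<longleftrightarrow> tpath R tau \<Delta> q' [C] []" using e1 e2 by blast
        show "q' = fst (trun \<Delta> q0 w)" by (simp add: q'_def)
      qed
      then show ?thesis using Cons True by simp
    qed
  qed
  have 2: "lequiv Act R tau \<Delta> q0 (B@(A#\<delta>)) (B@(\<gamma>@\<delta>))" using outer[OF key trX] .
  show ?case using 1 2 out unfolding lequiv_def by simp
qed
qed

theorem mainTheorem6:
  fixes Act :: "'a set" and R :: "('v::finite, 'a) rule set" and tau :: 'a
    and \<Delta> :: "('q::finite, 'v) trans" and q0 :: 'q
  assumes "bpa Act R"
    and "nfc \<Delta>"
    and "consistent Act R tau \<Delta> q0"
  shows "\<forall>\<alpha>. lequiv Act R tau \<Delta> q0 \<alpha> (tout \<Delta> q0 \<alpha>)"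
  using main[OF assms(2,3), of "[]"] by simp

end
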